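(* Let $G\in\mathcal{P}_*(\Theta)$ and let $l:\mathbb{N}\to\mathbb{N}$ satisfy $l(n)\in\{1,\ldots,2^n\}$ for every $n$ and be such that the sequence of sets $(\bar\Theta_{n,l(n)})_{n\in\mathbb{N}}$ is decreasing. Then $\lim_{n\to\infty}|\bar\Theta_{n,l(n)}|=0$. Moreover, $\lim_{n\to\infty}\max_{l\in\{1,\ldots,2^n\}}|\bar\Theta_{n,l}|=0$.
   Context: $|A|$ denotes Lebesgue measure. $\Theta\subseteq\mathbb{R}$ is $\mathbb{R}$, a closed half-line, or a compact interval with nonempty interior. $\mathcal{P}_*(\Theta)$ is the set of Borel probability measures on $\Theta$ whose support is a non-degenerate compact interval. $G$ is identified with its distribution function; $b_G(a_1,a_2]=\int_{(a_1,a_2]}\theta\,dG/(G(a_2)-G(a_1))$ if $G(a_2)>G(a_1)$, else $a_1$. SBA: $\mu_{1,1}=\int\theta\,dG$; for $j\ge2$, $\mu_{j,2l}=\mu_{j-1,l}$, $\mu_{j,2l-1}=b_G(\mu_{j-1,l-1},\mu_{j-1,l}]$, with $\mu_{j,0}=\inf\Theta$, $\mu_{j,2^j}=\sup\Theta$. Level $n$ intervals: $\Theta_{n,1}=[\mu_{n,0},\mu_{n,1}]$ if $\mu_{n,0}>-\infty$, else $(\mu_{n,0},\mu_{n,1}]$; $\Theta_{n,l}=(\mu_{n,l-1},\mu_{n,l}]$ for $2\le l\le 2^n-1$; $\Theta_{n,2^n}=(\mu_{n,2^n-1},\mu_{n,2^n}]$ if $\mu_{n,2^n}<\infty$, else $(\mu_{n,2^n-1},\infty)$.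 $\bar\Theta_{n,1}=\Theta_{n,1}\cap\operatorname{supp}(G)$, $\bar\Theta_{n,l}=\Theta_{n,l}$ for $2\le l\le 2^n-1$, $\bar\Theta_{n,2^n}=\Theta_{n,2^n}\cap\operatorname{supp}(G)$. *)

theory Defs
  imports "HOL-Probability.Probability"
begin

text \<open>The parameter space Theta is described by its endpoints lo = inf Theta, hi = sup Theta
 (extended reals, lo < hi): Theta = {x. lo <= x <= hi}. This covers R, closed half-lines and
 compact intervals with nonempty interior.\<close>
definition Theta_set :: "ereal \<Rightarrow> ereal \<Rightarrow> real set" where
  "Theta_set lo hi = {x. lo \<le> ereal x \<and> ereal x \<le> hi}"

definition admissible_Theta :: "ereal \<Rightarrow> ereal \<Rightarrow> bool" where
  "admissible_Theta lo hi \<longleftrightarrow> lo < hi"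

definition msupp :: "real measure \<Rightarrow> real set" where
  "msupp G = {x. \<forall>e>0. 0 < emeasure G (ball x e)}"

text \<open>G in P_*(Theta): Borel probability measure on Theta (extended by zero to R)
  whose support is a non-degenerate compact interval.\<close>
definition P_star :: "ereal \<Rightarrow> ereal \<Rightarrow> real measure \<Rightarrow> bool" where
  "P_star lo hi G \<longleftrightarrow> prob_space G \<and> sets G = sets borel \<and>
     emeasure G (Theta_set lo hi) = 1 \<and> (\<exists>a b. a < b \<and> msupp G = {a..b})"

text \<open>Distribution function, evaluated at extended reals (G(-inf) = 0, G(inf) = 1).\<close>
definition cdfE :: "real measure \<Rightarrow> ereal \<Rightarrow> real" where
  "cdfE G a = measure G {x. ereal x \<le> a}"

definition bG :: "real measure \<Rightarrow> ereal \<Rightarrow> ereal \<Rightarrow> ereal" where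
  "bG G a1 a2 = (if cdfE G a2 > cdfE G a1
      then ereal ((LINT x:{x. a1 < ereal x \<and> ereal x \<le> a2}|G. x) / (cdfE G a2 - cdfE G a1))
      else a1)"

text \<open>SBA points mu j l, for j >= 1 and 0 <= l <= 2^j. (Level 0 is a dummy.)\<close>
fun sba :: "ereal \<Rightarrow> ereal \<Rightarrow> real measure \<Rightarrow> nat \<Rightarrow> nat \<Rightarrow> ereal" where
  "sba lo hi G 0 l = lo"
| "sba lo hi G (Suc j) l =
     (if l = 0 then lo
      else if l = 2 ^ Suc j then hi
      else if j = 0 then ereal (integral\<^sup>L G (\<lambda>x. x))
      else if even l then sba lo hi G j (l div 2)
      else bG G (sba lo hi G j (l div 2)) (sba lo hi G j (l div 2 + 1)))"

definition Theta_nl :: "ereal \<Rightarrow> ereal \<Rightarrow> real measure \<Rightarrow> nat \<Rightarrow> nat \<Rightarrow> real set" where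
  "Theta_nl lo hi G n l =
    (let m = sba lo hi G n in
     if l = 1 then
       (if m 0 > -\<infinity> then {x. m 0 \<le> ereal x \<and> ereal x \<le> m 1}
        else {x. m 0 < ereal x \<and> ereal x \<le> m 1})
     else if l = 2 ^ n then
       (if m (2 ^ n) < \<infinity> then {x. m (2^n - 1) < ereal x \<and> ereal x \<le> m (2 ^ n)}
        else {x. m (2^n - 1) < ereal x})
     else {x. m (l - 1) < ereal x \<and> ereal x \<le> m l})"

definition Theta_bar :: "ereal \<Rightarrow> ereal \<Rightarrow> real measure \<Rightarrow> nat \<Rightarrow> nat \<Rightarrow> real set" where
  "Theta_bar lo hi G n l =
    (if l = 1 \<or> l = 2 ^ n then Theta_nl lo hi G n l \<inter> msupp G else Theta_nl lo hi G n l)"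

end

theory Submission
  imports Defs
begin

lemma sba_0[simp]: "sba lo hi G n 0 = lo"
  by (cases n) auto

lemma sba_top: "n \<ge> 1 \<Longrightarrow> sba lo hi G n (2^n) = hi"
  by (cases n) auto

lemma sba_even: "n \<ge> 1 \<Longrightarrow> j \<le> 2^n \<Longrightarrow> sba lo hi G (Suc n) (2*j) = sba lo hi G n j"
proof -
  assume n: "n \<ge> 1" and j: "j \<le> 2^n"
  show ?thesis
  proof (cases "j = 0")
    case True then show ?thesis by simp
  next
    case False
    show ?thesis
    proof (cases "j = 2^n")
      case True then show ?thesis using n sba_top[of n] by simp
    next
      case False
      with j have "2*j \<noteq> 2^Suc n" by simp
      with \<open>j \<noteq> 0\<close> n show ?thesis by simp
    qed
  qed
qed

lemma sba_odd: "n \<ge> 1 \<Longrightarrow> j < 2^n \<Longrightarrow>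
   sba lo hi G (Suc n) (2*j+1) = bG G (sba lo hi G n j) (sba lo hi G n (j+1))"
proof -
  assume n: "n \<ge> 1" and j: "j < 2^n"
  have "2*j+1 \<noteq> 2^Suc n"
    by (metis even_add even_mult_iff even_numeral even_power odd_one zero_less_Suc)
  with n show ?thesis by simp
qed

lemma sba_1: "sba lo hi G 1 1 = ereal (integral\<^sup>L G (\<lambda>x. x))"
  by simp

lemma sum_pairs: "(\<Sum>k\<in>{1..2*(N::nat)}. f k) = (\<Sum>k\<in>{1..N}. f (2*k-1) + f (2*k))"
proof (induction N)
  case 0 then show ?case by simp
next
  case (Suc N)
  have "{1..2*Suc N} = insert (2*N+2) (insert (2*N+1) {1..2*N})" by auto
  then have "(\<Sum>k\<in>{1..2*Suc N}. f k) = f (2*N+2) + f (2*N+1) + (\<Sum>k\<in>{1..2*N}. f k)"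
    by (simp add: add.assoc)
  also have "\<dots> = (\<Sum>k\<in>{1..Suc N}. f (2*k-1) + f (2*k))"
    using Suc by (simp add: ac_simps)
  finally show ?case .
qed

locale sba_ctx = prob_space G for G :: "real measure" +
  fixes lo hi :: ereal and a b :: real
  assumes lohi: "lo < hi"
    and sets_G: "sets G = sets borel"
    and theta1: "emeasure G (Theta_set lo hi) = 1"
    and ab: "a < b"
    and supp: "msupp G = {a..b}"
begin

lemma space_G[simp]: "space G = UNIV"
  using sets_eq_imp_space_eq[OF sets_G] by simp

lemma sets_G'[simp, measurable_cong]: "sets G = sets borel" by (rule sets_G)

lemma pos_ball: "x \<in> {a..b} \<Longrightarrow> e > 0 \<Longrightarrow> emeasure G (ball x e) > 0"
  using supp unfolding msupp_def by auto

lemma null_outside: "- {a..b} \<in> null_sets G"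
proof -
  define F where "F = {ball x e | x e. e > 0 \<and> emeasure G (ball x e) = 0}"
  have "\<And>S. S\<in>F \<Longrightarrow> open S" by (auto simp: F_def)
  then obtain F' where F': "F' \<subseteq> F" "countable F'" "\<Union>F' = \<Union>F" using Lindelof by metis
  have sub: "- {a..b} \<subseteq> \<Union>F"
  proof
    fix x assume "x \<in> - {a..b}"
    then have "x \<notin> msupp G" using supp by auto
    then obtain e where "e>0" "\<not> 0 < emeasure G (ball x e)" unfolding msupp_def by auto
    then have "emeasure G (ball x e) = 0" by auto
    then show "x \<in> \<Union>F" using \<open>e>0\<close> unfolding F_def by force
  qed
  have "(\<Union>S\<in>F'. S) \<in> null_sets G"
  proof (rule null_sets_UN'[OF F'(2)])
    fix S assume "S \<in> F'"
    then have "S \<in> F" using F' by auto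
    then show "S \<in> null_sets G" unfolding F_def by auto
  qed
  then have "\<Union>F' \<in> null_sets G" by simp
  moreover have "- {a..b} \<in> sets G" by simp
  moreover have "- {a..b} \<subseteq> \<Union>F'" using sub F'(3) by simp
  ultimately show ?thesis by (rule null_sets_subset)
qed

lemma AE_ab: "AE x in G. a \<le> x \<and> x \<le> b"
  by (rule AE_I'[OF null_outside]) auto

lemma theta_meas[measurable]: "Theta_set lo hi \<in> sets borel"
  unfolding Theta_set_def by measurable

lemma compl_theta: "emeasure G (- Theta_set lo hi) = 0"
proof -
  have "emeasure G (space G - Theta_set lo hi) = emeasure G (space G) - emeasure G (Theta_set lo hi)"
    by (rule emeasure_compl) (auto simp: theta1)
  then show ?thesis using theta1 emeasure_space_1 by (simp add: Compl_eq_Diff_UNIV)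
qed

lemma lo_le: "lo \<le> ereal a"
proof (rule ccontr)
  assume "\<not> lo \<le> ereal a" then have "ereal a < lo" by auto
  then obtain r where r: "ereal a < ereal r" "ereal r < lo"
    by (metis ereal_dense2 less_ereal.simps(1) ereal_less_eq(1) order_less_le_trans)
  have "ball a (r - a) \<subseteq> - Theta_set lo hi"
  proof
    fix x assume "x \<in> ball a (r - a)"
    then have "x < r" by (auto simp: dist_real_def)
    then have "ereal x < lo" using r(2) by (meson ereal_less_eq(3) less_imp_le not_le order_le_less_trans)
    then show "x \<in> - Theta_set lo hi" by (auto simp: Theta_set_def)
  qed
  then have "emeasure G (ball a (r - a)) \<le> 0"
    using compl_theta emeasure_mono[of "ball a (r-a)" "- Theta_set lo hi" G] by auto
  moreover have "emeasure G (ball a (r - a)) > 0" using r ab by (intro pos_ball) auto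
  ultimately show False by auto
qed

lemma hi_ge: "ereal b \<le> hi"
proof (rule ccontr)
  assume "\<not> ereal b \<le> hi" then have "hi < ereal b" by auto
  then obtain r where r: "hi < ereal r" "ereal r < ereal b"
    by (metis ereal_dense2 less_ereal.simps(1) ereal_less_eq(1) order_less_le_trans)
  have "ball b (b - r) \<subseteq> - Theta_set lo hi"
  proof
    fix x assume "x \<in> ball b (b - r)"
    then have "x > r" by (auto simp: dist_real_def)
    then have "hi < ereal x" using r(1) by (meson ereal_less_eq(3) less_imp_le not_le order_less_le_trans)
    then show "x \<in> - Theta_set lo hi" by (auto simp: Theta_set_def)
  qed
  then have "emeasure G (ball b (b - r)) \<le> 0"
    using compl_theta emeasure_mono[of "ball b (b-r)" "- Theta_set lo hi" G] by auto
  moreover have "emeasure G (ball b (b - r)) > 0" using r ab by (intro pos_ball) auto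
  ultimately show False by auto
qed

lemma pos_open: "a \<le> u \<Longrightarrow> u < v \<Longrightarrow> v \<le> b \<Longrightarrow> measure G {u<..<v} > 0"
proof -
  assume uv: "a \<le> u" "u < v" "v \<le> b"
  have "ball ((u+v)/2) ((v-u)/2) = {u<..<v}" by (auto simp: ball_eq_greaterThanLessThan field_simps)
  moreover have "emeasure G (ball ((u+v)/2) ((v-u)/2)) > 0" using uv by (intro pos_ball) auto
  ultimately show ?thesis by (simp add: emeasure_eq_measure)
qed

lemma intx: "integrable G (\<lambda>x::real. x)"
proof (rule integrable_const_bound[where B="\<bar>a\<bar> + \<bar>b\<bar>"])
  show "AE x in G. norm x \<le> \<bar>a\<bar> + \<bar>b\<bar>"
    using AE_ab by eventually_elim auto
qed simp

definition W :: "real set \<Rightarrow> real" where "W S = measure G S"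
definition Sx :: "real set \<Rightarrow> real" where "Sx S = integral\<^sup>L G (\<lambda>x. indicator S x * x)"

lemma int_ind: "S \<in> sets borel \<Longrightarrow> integrable G (\<lambda>x. indicator S x * x)"
  using integrable_real_mult_indicator[of S G "\<lambda>x. x"] intx by (simp add: mult.commute)

lemma int_ind1: "S \<in> sets borel \<Longrightarrow> integrable G (\<lambda>x. indicator S x :: real)"
  by (rule integrable_real_indicator) (auto simp: less_top[symmetric])

lemma int_ind1c: "S \<in> sets borel \<Longrightarrow> integrable G (\<lambda>x. c * indicator S x :: real)"
  using int_ind1 by auto

lemma mean_strict:
  assumes S: "S \<in> sets borel" and cd: "c < d" "a \<le> c" "d \<le> b"
    and sub1: "{c<..<d} \<subseteq> S" and sub2: "S \<inter> {a..b} \<subseteq> {c..d}"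
  shows "W S > 0" "c * W S < Sx S" "Sx S < d * W S"
proof -
  let ?h = "(c+d)/2"
  have posR: "measure G {?h<..<d} > 0" using cd by (intro pos_open) auto
  have posL: "measure G {c<..<?h} > 0" using cd by (intro pos_open) auto
  have "measure G {c<..<d} \<le> W S" unfolding W_def using sub1 S by (intro finite_measure_mono) auto
  moreover have "measure G {c<..<d} > 0" using cd by (intro pos_open) auto
  ultimately show "W S > 0" by linarith
  have intS: "integrable G (\<lambda>x. indicator S x * x)" using int_ind S by blast
  have "integral\<^sup>L G (\<lambda>x. (d-c)/2 * indicator {?h<..<d} x) \<le> integral\<^sup>L G (\<lambda>x. indicator S x * x - c * indicator S x)"
  proof (rule integral_mono_AE)
    show "integrable G (\<lambda>x. (d-c)/2 * indicator {?h<..<d} x)" by (rule int_ind1c) simp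
    show "integrable G (\<lambda>x. indicator S x * x - c * indicator S x)" using intS int_ind1c[OF S] by auto
    show "AE x in G. (d-c)/2 * indicator {?h<..<d} x \<le> indicator S x * x - c * indicator S x"
      using AE_ab
    proof eventually_elim
      case (elim x)
      show ?case
      proof (cases "x \<in> {?h<..<d}")
        case True then have "x \<in> S" using sub1 by auto
        then show ?thesis using True by (auto simp: indicator_def)
      next
        case False
        show ?thesis
        proof (cases "x \<in> S")
          case True then have "x \<ge> c" using sub2 elim by auto
          then show ?thesis using False True by (auto simp: indicator_def)
        qed (use False in \<open>auto simp: indicator_def\<close>)
      qed
    qed
  qed
  then have "(d-c)/2 * measure G {?h<..<d} \<le> Sx S - c * W S"
    using intS int_ind1c[OF S] by (simp add: Sx_def W_def)
  moreover have "(d-c)/2 * measure G {?h<..<d} > 0" using posR cd by simp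
  ultimately show "c * W S < Sx S" by linarith
  have "integral\<^sup>L G (\<lambda>x. (d-c)/2 * indicator {c<..<?h} x) \<le> integral\<^sup>L G (\<lambda>x. d * indicator S x - indicator S x * x)"
  proof (rule integral_mono_AE)
    show "integrable G (\<lambda>x. (d-c)/2 * indicator {c<..<?h} x)" by (rule int_ind1c) simp
    show "integrable G (\<lambda>x. d * indicator S x - indicator S x * x)" using intS int_ind1c[OF S] by auto
    show "AE x in G. (d-c)/2 * indicator {c<..<?h} x \<le> d * indicator S x - indicator S x * x"
      using AE_ab
    proof eventually_elim
      case (elim x)
      show ?case
      proof (cases "x \<in> {c<..<?h}")
        case True then have "x \<in> S" using sub1 by auto
        then show ?thesis using True by (auto simp: indicator_def)
      next
        case False
        show ?thesis
        proof (cases "x \<in> S")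
          case True then have "x \<le> d" using sub2 elim by auto
          then show ?thesis using False True by (auto simp: indicator_def)
        qed (use False in \<open>auto simp: indicator_def\<close>)
      qed
    qed
  qed
  then have "(d-c)/2 * measure G {c<..<?h} \<le> d * W S - Sx S"
    using intS int_ind1c[OF S] by (simp add: Sx_def W_def)
  moreover have "(d-c)/2 * measure G {c<..<?h} > 0" using posL cd by simp
  ultimately show "Sx S < d * W S" by linarith
qed

lemma grid:
  assumes "\<delta> > 0"
  shows "\<exists>\<kappa>>0. \<forall>t. a \<le> t \<longrightarrow> t + \<delta> \<le> b \<longrightarrow> \<kappa> \<le> measure G {t<..<t+\<delta>}"
proof (cases "\<delta> \<le> b - a")
  case False then show ?thesis by (intro exI[of _ 1]) auto
next
  case True
  define h where "h = \<delta>/2"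
  have h: "h > 0" using assms by (simp add: h_def)
  define J where "J = {j::nat. a + (real j + 1) * h \<le> b}"
  define f where "f j = measure G {a + real j * h<..<a + (real j + 1) * h}" for j :: nat
  have finJ: "finite J"
  proof (rule finite_subset[of J "{..nat \<lceil>(b-a)/h\<rceil>}"])
    show "J \<subseteq> {..nat \<lceil>(b-a)/h\<rceil>}"
    proof
      fix j assume "j \<in> J"
      then have "(real j + 1) * h \<le> b - a" by (simp add: J_def)
      then have "real j * h \<le> b - a" using h by (simp add: algebra_simps)
      then have "real j \<le> (b-a)/h" using h by (simp add: pos_le_divide_eq)
      also have "\<dots> \<le> real (nat \<lceil>(b-a)/h\<rceil>)" by (rule real_nat_ceiling_ge)
      finally show "j \<in> {..nat \<lceil>(b-a)/h\<rceil>}" by simp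
    qed
  qed simp
  have J0: "0 \<in> J" using True assms by (simp add: J_def h_def)
  have fpos: "f j > 0" if "j \<in> J" for j
    unfolding f_def using that h by (intro pos_open) (auto simp: J_def)
  define \<kappa> where "\<kappa> = Min (f ` J)"
  have kpos: "\<kappa> > 0" unfolding \<kappa>_def using finJ J0 fpos by (subst Min_gr_iff) auto
  show ?thesis
  proof (intro exI[of _ \<kappa>] conjI allI impI kpos)
    fix t assume t: "a \<le> t" "t + \<delta> \<le> b"
    define j where "j = nat \<lceil>(t-a)/h\<rceil>"
    have "(t-a)/h \<ge> 0" using t h by simp
    then have rj: "real j = \<lceil>(t-a)/h\<rceil>" unfolding j_def by simp
    have c1: "(t-a)/h \<le> real j" using rj by linarith
    have c2: "real j < (t-a)/h + 1" using rj by linarith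
    have d1: "t - a \<le> real j * h" using c1 h by (simp add: pos_divide_le_eq)
    have "real j - 1 < (t-a)/h" using c2 by simp
    then have "(real j - 1) * h < t - a" using h by (simp add: pos_less_divide_eq)
    then have d2: "real j * h < t - a + h" by (simp add: algebra_simps)
    have "a + (real j + 1) * h = a + real j * h + h" by (simp add: algebra_simps)
    also have "\<dots> \<le> b" using d2 t h_def by linarith
    finally have jJ: "j \<in> J" unfolding J_def by simp
    have "\<kappa> \<le> f j" unfolding \<kappa>_def using finJ jJ by simp
    also have "f j \<le> measure G {t<..<t+\<delta>}"
    proof -
      have "{a + real j * h<..<a + (real j + 1) * h} \<subseteq> {t<..<t+\<delta>}"
      proof
        fix x assume x: "x \<in> {a + real j * h<..<a + (real j + 1) * h}"
        have "(real j + 1) * h = real j * h + h" by (simp add: algebra_simps)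
        moreover have "a + real j * h < x" "x < a + (real j + 1) * h" using x by auto
        ultimately have "t < x" "x < t + \<delta>" using d1 d2 h_def by linarith+
        then show "x \<in> {t<..<t+\<delta>}" by auto
      qed
      then show ?thesis unfolding f_def by (intro finite_measure_mono) auto
    qed
    finally show "\<kappa> \<le> measure G {t<..<t+\<delta>}" .
  qed
qed

definition q :: "nat \<Rightarrow> nat \<Rightarrow> real" where
  "q n k = (if k = 0 then a else if k = 2^n then b else real_of_ereal (sba lo hi G n k))"

lemma q0[simp]: "q m 0 = a" by (simp add: q_def)
lemma qtop[simp]: "q m (2^m) = b" by (simp add: q_def)

definition cellE :: "nat \<Rightarrow> nat \<Rightarrow> real set" where
  "cellE n k = {x. sba lo hi G n (k - 1) < ereal x \<and> ereal x \<le> sba lo hi G n k}"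

lemma cellE_meas[measurable]: "cellE n k \<in> sets borel"
  unfolding cellE_def by measurable

definition good :: "nat \<Rightarrow> bool" where
  "good n \<longleftrightarrow> (\<forall>k. 0 < k \<and> k < 2^n \<longrightarrow> sba lo hi G n k = ereal (q n k) \<and> a < q n k \<and> q n k < b)
      \<and> (\<forall>k<2^n. q n k < q n (k+1))"

lemma bG_eq:
  assumes "c0 \<le> d0" and pos: "W {x. c0 < ereal x \<and> ereal x \<le> d0} > 0"
  shows "bG G c0 d0 = ereal (Sx {x. c0 < ereal x \<and> ereal x \<le> d0} / W {x. c0 < ereal x \<and> ereal x \<le> d0})"
proof -
  let ?E = "{x. c0 < ereal x \<and> ereal x \<le> d0}"
  have eq: "{x. ereal x \<le> d0} - {x. ereal x \<le> c0} = ?E" by auto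
  have "measure G ({x. ereal x \<le> d0} - {x. ereal x \<le> c0}) = measure G {x. ereal x \<le> d0} - measure G {x. ereal x \<le> c0}"
    using assms(1) by (intro finite_measure_Diff) (auto intro: order_trans)
  then have cd: "cdfE G d0 - cdfE G c0 = W ?E" unfolding cdfE_def W_def eq by simp
  show ?thesis
    unfolding bG_def using cd pos by (simp add: set_lebesgue_integral_def Sx_def mult.commute)
qed

context
  fixes n :: nat
  assumes n1: "n \<ge> 1" and gd: "good n"
begin

lemma q_int: "0 < k \<Longrightarrow> k < 2^n \<Longrightarrow> sba lo hi G n k = ereal (q n k) \<and> a < q n k \<and> q n k < b"
  using gd unfolding good_def by blast

lemma q_step: "k < 2^n \<Longrightarrow> q n k < q n (k+1)"
  using gd unfolding good_def by blast


lemma q_bounds: "j \<le> 2^n \<Longrightarrow> a \<le> q n j \<and> q n j \<le> b"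
proof -
  assume j: "j \<le> 2^n"
  show ?thesis
  proof (cases "j = 0")
    case True then show ?thesis using ab by simp
  next
    case False
    show ?thesis
    proof (cases "j = 2^n")
      case True then show ?thesis using ab by simp
    next
      case False
      then have "0 < j" "j < 2^n" using j \<open>j \<noteq> 0\<close> by auto
      then show ?thesis using q_int[of j] by linarith
    qed
  qed
qed

lemma sba_le_q: "j < 2^n \<Longrightarrow> sba lo hi G n j \<le> ereal (q n j)"
proof -
  assume j: "j < 2^n"
  show ?thesis
  proof (cases "j = 0")
    case True then show ?thesis using lo_le by simp
  next
    case False
    then have "0 < j" by simp
    then have "sba lo hi G n j = ereal (q n j)" using q_int[of j] j by blast
    then show ?thesis by simp
  qed
qed

lemma q_le_sba: "0 < k \<Longrightarrow> k \<le> 2^n \<Longrightarrow> ereal (q n k) \<le> sba lo hi G n k"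
proof -
  assume k: "0 < k" "k \<le> 2^n"
  show ?thesis
  proof (cases "k = 2^n")
    case True then show ?thesis using hi_ge sba_top[OF n1, of lo hi G] by simp
  next
    case False
    then have "k < 2^n" using k by simp
    then have "sba lo hi G n k = ereal (q n k)" using q_int[of k] k by blast
    then show ?thesis by simp
  qed
qed

lemma cell_sub1: "1 \<le> k \<Longrightarrow> k \<le> 2^n \<Longrightarrow> {q n (k-1)<..<q n k} \<subseteq> cellE n k"
proof
  fix x assume k: "1 \<le> k" "k \<le> 2^n" and x: "x \<in> {q n (k-1)<..<q n k}"
  have "sba lo hi G n (k-1) \<le> ereal (q n (k-1))" using k by (intro sba_le_q) auto
  also have "\<dots> < ereal x" using x by simp
  finally have 1: "sba lo hi G n (k-1) < ereal x" .
  have "ereal x \<le> ereal (q n k)" using x by simp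
  also have "\<dots> \<le> sba lo hi G n k" using k by (intro q_le_sba) auto
  finally show "x \<in> cellE n k" using 1 by (simp add: cellE_def)
qed

lemma cell_sub2: "1 \<le> k \<Longrightarrow> k \<le> 2^n \<Longrightarrow> cellE n k \<inter> {a..b} \<subseteq> {q n (k-1)..q n k}"
proof
  fix x assume k: "1 \<le> k" "k \<le> 2^n" and x: "x \<in> cellE n k \<inter> {a..b}"
  have "q n (k-1) \<le> x"
  proof (cases "k - 1 = 0")
    case True then show ?thesis using x by (simp add: q_def)
  next
    case False
    then have "sba lo hi G n (k-1) = ereal (q n (k-1))" using q_int[of "k-1"] k by auto
    then show ?thesis using x by (simp add: cellE_def)
  qed
  moreover have "x \<le> q n k"
  proof (cases "k = 2^n")
    case True then show ?thesis using x by (simp add: q_def)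
  next
    case False
    then have "sba lo hi G n k = ereal (q n k)" using q_int[of "k"] k by auto
    then show ?thesis using x by (simp add: cellE_def)
  qed
  ultimately show "x \<in> {q n (k-1)..q n k}" by simp
qed

lemma cell_lt: "1 \<le> k \<Longrightarrow> k \<le> 2^n \<Longrightarrow> q n (k-1) < q n k"
  using q_step[of "k-1"] by simp

lemma cell_mean:
  assumes "1 \<le> k" "k \<le> 2^n"
  shows "W (cellE n k) > 0" "q n (k-1) * W (cellE n k) < Sx (cellE n k)"
    "Sx (cellE n k) < q n k * W (cellE n k)"
proof -
  have qb: "a \<le> q n (k-1)" "q n k \<le> b" using q_bounds[of "k-1"] q_bounds[of k] assms by auto
  show "W (cellE n k) > 0" "q n (k-1) * W (cellE n k) < Sx (cellE n k)"
    "Sx (cellE n k) < q n k * W (cellE n k)"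
    using mean_strict[OF cellE_meas cell_lt[OF assms] qb cell_sub1[OF assms] cell_sub2[OF assms]] by auto
qed

definition mu :: "nat \<Rightarrow> real" where "mu j = Sx (cellE n (j+1)) / W (cellE n (j+1))"

lemma mu_bounds: "j < 2^n \<Longrightarrow> q n j < mu j \<and> mu j < q n (j+1)"
proof -
  assume j: "j < 2^n"
  have c: "W (cellE n (j+1)) > 0" "q n j * W (cellE n (j+1)) < Sx (cellE n (j+1))"
    "Sx (cellE n (j+1)) < q n (j+1) * W (cellE n (j+1))"
    using cell_mean[of "j+1"] j by auto
  then show ?thesis unfolding mu_def by (simp add: pos_less_divide_eq pos_divide_less_eq)
qed

lemma sba_odd_mu: "j < 2^n \<Longrightarrow> sba lo hi G (Suc n) (2*j+1) = ereal (mu j)"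
proof -
  assume j: "j < 2^n"
  have "sba lo hi G n j \<le> ereal (q n j)" using j by (intro sba_le_q)
  also have "\<dots> \<le> ereal (q n (j+1))" using q_step[OF j] by simp
  also have "\<dots> \<le> sba lo hi G n (j+1)" using j by (intro q_le_sba) auto
  finally have le: "sba lo hi G n j \<le> sba lo hi G n (j+1)" .
  have ce: "cellE n (j+1) = {x. sba lo hi G n j < ereal x \<and> ereal x \<le> sba lo hi G n (j+1)}"
    by (simp add: cellE_def)
  have "W (cellE n (j+1)) > 0" using j by (intro cell_mean) auto
  then show ?thesis
    using sba_odd[OF n1 j, of lo hi G] bG_eq[OF le] ce by (simp add: mu_def)
qed

lemma q_even: "j \<le> 2^n \<Longrightarrow> q (Suc n) (2*j) = q n j"
proof -
  assume j: "j \<le> 2^n"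
  show ?thesis
  proof (cases "j = 0")
    case True then show ?thesis by (simp add: q_def)
  next
    case False
    show ?thesis
    proof (cases "j = 2^n")
      case True then show ?thesis by (simp add: q_def)
    next
      case False
      with j have "2*j \<noteq> 2^Suc n" by simp
      then show ?thesis using \<open>j \<noteq> 0\<close> False sba_even[OF n1 j, of lo hi G] by (simp add: q_def)
    qed
  qed
qed

lemma q_odd: "j < 2^n \<Longrightarrow> q (Suc n) (2*j+1) = mu j"
proof -
  assume j: "j < 2^n"
  have "2*j+1 \<noteq> 2^Suc n"
    by (metis even_add even_mult_iff even_numeral even_power odd_one zero_less_Suc)
  then show ?thesis using sba_odd_mu[OF j] by (simp add: q_def)
qed

lemma good_Suc: "good (Suc n)"
  unfolding good_def
proof (rule conjI; intro allI impI)
  fix k :: nat assume k: "0 < k \<and> k < 2 ^ Suc n"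
  have "k = 2*(k div 2) \<or> k = 2*(k div 2)+1" by presburger
  then obtain j where "k = 2*j \<or> k = 2*j+1" by blast
  then show "sba lo hi G (Suc n) k = ereal (q (Suc n) k) \<and> a < q (Suc n) k \<and> q (Suc n) k < b"
  proof
    assume kj: "k = 2*j"
    then have j: "0 < j" "j < 2^n" using k by auto
    then show ?thesis using kj q_int[OF j] q_even[of j] sba_even[OF n1, of j lo hi G] by auto
  next
    assume kj: "k = 2*j+1"
    then have j: "j < 2^n" using k by auto
    have "a \<le> q n j" "q n (j+1) \<le> b" using q_bounds[of j] q_bounds[of "j+1"] j by auto
    then show ?thesis using kj mu_bounds[OF j] q_odd[OF j] sba_odd_mu[OF j] by auto
  qed
next
  fix k :: nat assume k: "k < 2 ^ Suc n"
  have "k = 2*(k div 2) \<or> k = 2*(k div 2)+1" by presburger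
  then obtain j where "k = 2*j \<or> k = 2*j+1" by blast
  then show "q (Suc n) k < q (Suc n) (k + 1)"
  proof
    assume kj: "k = 2*j"
    then have j: "j < 2^n" using k by auto
    then show ?thesis using kj q_even[of j] q_odd[OF j] mu_bounds[OF j] by auto
  next
    assume kj: "k = 2*j+1"
    then have j: "j < 2^n" using k by auto
    have "k + 1 = 2*(j+1)" using kj by simp
    then show ?thesis using kj q_even[of "j+1"] q_odd[OF j] mu_bounds[OF j] j by auto
  qed
qed

end

lemma good_1: "good 1"
proof -
  have m: "a * W UNIV < Sx UNIV" "Sx UNIV < b * W UNIV"
    using mean_strict[of UNIV a b] ab by auto
  have W1: "W UNIV = 1" unfolding W_def using prob_space by simp
  have S1: "Sx UNIV = integral\<^sup>L G (\<lambda>x. x)" by (simp add: Sx_def)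
  have q11: "q 1 1 = integral\<^sup>L G (\<lambda>x. x)" by (simp add: q_def)
  have q10: "q 1 0 = a" and q12: "q 1 2 = b" "q (Suc 0) (Suc (Suc 0)) = b" by (simp_all add: q_def)
  show ?thesis unfolding good_def
  proof (rule conjI; intro allI impI)
    fix k :: nat assume "0 < k \<and> k < 2^1"
    then have "k = 1" by auto
    then show "sba lo hi G 1 k = ereal (q 1 k) \<and> a < q 1 k \<and> q 1 k < b"
      using m W1 S1 q11 by simp
  next
    fix k :: nat assume "k < 2^1"
    then have "k = 0 \<or> k = 1" by auto
    then show "q 1 k < q 1 (k+1)" using m W1 S1 q11 q10 q12 by auto
  qed
qed

lemma good_all: "n \<ge> 1 \<Longrightarrow> good n"
proof (induction n rule: nat_induct_at_least)
  case base then show ?case by (rule good_1)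
next
  case (Suc n) then show ?case by (intro good_Suc)
qed

lemma gain_alg:
  fixes sL sR wL wR :: real
  assumes wL: "0 < wL" "wL \<le> 1" and wR: "0 < wR"
  shows "((sL+sR)/(wL+wR) * wL - sL)^2 \<le> sL^2/wL + sR^2/wR - (sL+sR)^2/(wL+wR)"
proof -
  define w where "w = wL + wR"
  have w: "w > 0" using wL wR by (simp add: w_def)
  define D where "D = (sL*wR - sR*wL)^2"
  have D: "D \<ge> 0" by (simp add: D_def)
  have e1: "((sL+sR)/(wL+wR) * wL - sL)^2 = D / w^2"
    using w unfolding D_def w_def by (simp add: field_simps power2_eq_square)
  have e2: "sL^2/wL + sR^2/wR - (sL+sR)^2/(wL+wR) = D / (wL*wR*w)"
    using w wL wR unfolding D_def w_def by (simp add: field_simps power2_eq_square)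
  have "wL*wR \<le> wR" using wL wR by (simp add: mult_le_cancel_right1)
  then have "wL*wR*w \<le> w*w" using w wL by (simp add: w_def mult_right_mono)
  moreover have "wL*wR*w > 0" using w wL wR by simp
  ultimately have "D / (w*w) \<le> D / (wL*wR*w)" using D by (intro divide_left_mono) auto
  then show ?thesis using e1 e2 by (simp add: power2_eq_square)
qed

definition Phi :: "nat \<Rightarrow> real" where
  "Phi n = (\<Sum>k\<in>{1..2^n}. (Sx (cellE n k))^2 / W (cellE n k))"

definition Wsum :: "nat \<Rightarrow> real" where
  "Wsum n = (\<Sum>k\<in>{1..2^n}. W (cellE n k))"

definition gain :: "nat \<Rightarrow> nat \<Rightarrow> real" where
  "gain n j = (Sx (cellE (Suc n) (2*j+1)))^2 / W (cellE (Suc n) (2*j+1))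
     + (Sx (cellE (Suc n) (2*j+2)))^2 / W (cellE (Suc n) (2*j+2))
     - (Sx (cellE n (j+1)))^2 / W (cellE n (j+1))"

lemma W_union: "A \<in> sets borel \<Longrightarrow> B \<in> sets borel \<Longrightarrow> A \<inter> B = {} \<Longrightarrow> W (A \<union> B) = W A + W B"
  unfolding W_def by (rule finite_measure_Union) auto

lemma Sx_union: "A \<in> sets borel \<Longrightarrow> B \<in> sets borel \<Longrightarrow> A \<inter> B = {} \<Longrightarrow> Sx (A \<union> B) = Sx A + Sx B"
proof -
  assume A: "A \<in> sets borel" and B: "B \<in> sets borel" and AB: "A \<inter> B = {}"
  have "(\<lambda>x. indicator (A \<union> B) x * x) = (\<lambda>x. indicator A x * x + indicator B x * (x::real))"
    using AB by (auto simp: indicator_def fun_eq_iff)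
  then show ?thesis unfolding Sx_def using int_ind[OF A] int_ind[OF B] by simp
qed

lemma W_le1: "W A \<le> 1" unfolding W_def by simp

lemma W_nonneg: "W A \<ge> 0" unfolding W_def by simp

context
  fixes n j :: nat
  assumes n1: "n \<ge> 1" and jn: "j < 2^n"
begin

lemma gdn: "good n" using good_all n1 by blast
lemma gdS: "good (Suc n)" using good_all n1 by simp

lemma sba_mid: "sba lo hi G n j < ereal (mu n j)" "ereal (mu n j) < sba lo hi G n (j+1)"
proof -
  have "sba lo hi G n j \<le> ereal (q n j)" using sba_le_q[OF n1 gdn jn] .
  also have "\<dots> < ereal (mu n j)" using mu_bounds[OF n1 gdn jn] by simp
  finally show "sba lo hi G n j < ereal (mu n j)" .
  have "ereal (mu n j) < ereal (q n (j+1))" using mu_bounds[OF n1 gdn jn] by simp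
  also have "\<dots> \<le> sba lo hi G n (j+1)" using q_le_sba[OF n1 gdn, of "j+1"] jn by simp
  finally show "ereal (mu n j) < sba lo hi G n (j+1)" .
qed

lemma LL_eq: "cellE (Suc n) (2*j+1) = {x. sba lo hi G n j < ereal x \<and> x \<le> mu n j}"
proof -
  have "sba lo hi G (Suc n) (2*j) = sba lo hi G n j" using sba_even[OF n1, of j] jn by simp
  then show ?thesis using sba_odd_mu[OF n1 gdn jn] by (simp add: cellE_def)
qed

lemma RR_eq: "cellE (Suc n) (2*j+2) = {x. mu n j < x \<and> ereal x \<le> sba lo hi G n (j+1)}"
proof -
  have "sba lo hi G (Suc n) (2*(j+1)) = sba lo hi G n (j+1)" using sba_even[OF n1, of "j+1"] jn by simp
  moreover have "2*j+2 = 2*(j+1)" by simp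
  ultimately have e: "sba lo hi G (Suc n) (2*j+2) = sba lo hi G n (j+1)" by metis
  have "2*j+2-1 = 2*j+1" by simp
  then show ?thesis using sba_odd_mu[OF n1 gdn jn] e by (simp add: cellE_def)
qed

lemma EE_eq: "cellE n (j+1) = cellE (Suc n) (2*j+1) \<union> cellE (Suc n) (2*j+2)"
proof -
  have "cellE n (j+1) = {x. sba lo hi G n j < ereal x \<and> ereal x \<le> sba lo hi G n (j+1)}"
    by (simp add: cellE_def)
  moreover
  have "ereal x \<le> sba lo hi G n (j+1)" if "x \<le> mu n j" for x
  proof -
    have "ereal x \<le> ereal (mu n j)" using that by simp
    then show ?thesis using less_imp_le[OF sba_mid(2)] by (rule order_trans)
  qed
  moreover
  have "sba lo hi G n j < ereal x" if "mu n j < x" for x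
  proof -
    have "ereal (mu n j) < ereal x" using that by simp
    then show ?thesis by (rule less_trans[OF sba_mid(1)])
  qed
  ultimately show ?thesis unfolding LL_eq RR_eq by (auto simp: not_le)
qed

lemma LR_disj: "cellE (Suc n) (2*j+1) \<inter> cellE (Suc n) (2*j+2) = {}"
  unfolding LL_eq RR_eq by auto

lemma W_split: "W (cellE n (j+1)) = W (cellE (Suc n) (2*j+1)) + W (cellE (Suc n) (2*j+2))"
  unfolding EE_eq by (rule W_union[OF cellE_meas cellE_meas LR_disj])

lemma S_split: "Sx (cellE n (j+1)) = Sx (cellE (Suc n) (2*j+1)) + Sx (cellE (Suc n) (2*j+2))"
  unfolding EE_eq by (rule Sx_union[OF cellE_meas cellE_meas LR_disj])

lemma WL_pos: "W (cellE (Suc n) (2*j+1)) > 0"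
  using cell_mean(1)[of "Suc n" "2*j+1"] gdS jn by simp

lemma WR_pos: "W (cellE (Suc n) (2*j+2)) > 0"
  using cell_mean(1)[of "Suc n" "2*j+2"] gdS jn by simp

lemma gain_ge: "gain n j \<ge> (mu n j * W (cellE (Suc n) (2*j+1)) - Sx (cellE (Suc n) (2*j+1)))^2"
proof -
  have mu: "mu n j = (Sx (cellE (Suc n) (2*j+1)) + Sx (cellE (Suc n) (2*j+2))) /
     (W (cellE (Suc n) (2*j+1)) + W (cellE (Suc n) (2*j+2)))"
    unfolding mu_def[OF n1 gdn] using S_split W_split by simp
  show ?thesis
    unfolding gain_def mu S_split W_split
    using gain_alg[OF WL_pos W_le1 WR_pos] by simp
qed

lemma gain_nonneg: "gain n j \<ge> 0"
  using gain_ge by (meson order_trans zero_le_power2)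

lemma A_lower:
  assumes eps: "\<epsilon> > 0" and kap: "\<forall>t. a \<le> t \<longrightarrow> t + \<epsilon>/4 \<le> b \<longrightarrow> \<kappa> \<le> measure G {t<..<t+\<epsilon>/4}"
    and big: "q n (j+1) - q n j \<ge> \<epsilon>"
  shows "\<epsilon>/4 * \<kappa> \<le> mu n j * W (cellE (Suc n) (2*j+1)) - Sx (cellE (Suc n) (2*j+1))"
proof -
  define c where "c = q n j"
  define d where "d = q n (j+1)"
  define m where "m = mu n j"
  define L where "L = cellE (Suc n) (2*j+1)"
  define R where "R = cellE (Suc n) (2*j+2)"
  have mb: "c < m" "m < d" using mu_bounds[OF n1 gdn jn] by (auto simp: c_def d_def m_def)
  have qb: "a \<le> c" "d \<le> b" using q_bounds[OF n1 gdn, of j] q_bounds[OF n1 gdn, of "j+1"] jn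
    by (auto simp: c_def d_def)
  have sub: "{c<..<d} \<subseteq> cellE n (j+1)" using cell_sub1[OF n1 gdn, of "j+1"] jn by (simp add: c_def d_def)
  have Lx: "\<And>x. x \<in> L \<Longrightarrow> x \<le> m" unfolding L_def LL_eq m_def by auto
  have Rx: "\<And>x. x \<in> R \<Longrightarrow> m < x" unfolding R_def RR_eq m_def by auto
  have Li: "\<And>x. x \<in> {c<..<d} \<Longrightarrow> x \<le> m \<Longrightarrow> x \<in> L"
    using sub unfolding L_def EE_eq m_def RR_eq by auto
  have Ri: "\<And>x. x \<in> {c<..<d} \<Longrightarrow> m < x \<Longrightarrow> x \<in> R"
    using sub unfolding R_def EE_eq m_def LL_eq by auto
  have Lm: "L \<in> sets borel" "R \<in> sets borel" by (simp_all add: L_def R_def)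
  have WE: "W (cellE n (j+1)) > 0" using cell_mean(1)[OF n1 gdn, of "j+1"] jn by simp
  have "m * W (cellE n (j+1)) = Sx (cellE n (j+1))" unfolding m_def mu_def[OF n1 gdn] using WE by simp
  then have AR: "m * W L - Sx L = Sx R - m * W R"
    unfolding L_def R_def S_split W_split by (simp add: algebra_simps)
  have "m - c \<ge> \<epsilon>/2 \<or> d - m \<ge> \<epsilon>/2" using big by (simp add: c_def d_def) linarith
  then have "\<epsilon>/4 * \<kappa> \<le> m * W L - Sx L"
  proof
    assume h: "m - c \<ge> \<epsilon>/2"
    define S where "S = {c<..<c+\<epsilon>/4}"
    have kS: "\<kappa> \<le> measure G S" unfolding S_def using kap qb mb h eps by auto
    have "integral\<^sup>L G (\<lambda>x. \<epsilon>/4 * indicator S x) \<le> integral\<^sup>L G (\<lambda>x. m * indicator L x - indicator L x * x)"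
    proof (rule integral_mono)
      show "integrable G (\<lambda>x. \<epsilon>/4 * indicator S x)" by (rule int_ind1c) (simp add: S_def)
      show "integrable G (\<lambda>x. m * indicator L x - indicator L x * x)"
        using int_ind[OF Lm(1)] int_ind1c[OF Lm(1)] by auto
      fix x
      show "\<epsilon>/4 * indicator S x \<le> m * indicator L x - indicator L x * x"
      proof (cases "x \<in> S")
        case True
        then have "x \<in> {c<..<d}" "x \<le> m" "x \<le> m - \<epsilon>/4" using h mb eps by (auto simp: S_def)
        then have "x \<in> L" using Li by blast
        then show ?thesis using True \<open>x \<le> m - \<epsilon>/4\<close> by (simp add: indicator_def)
      next
        case False
        then show ?thesis using Lx[of x] by (cases "x \<in> L") (simp_all add: indicator_def)
      qed
    qed
    then have "\<epsilon>/4 * measure G S \<le> m * W L - Sx L"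
      using int_ind[OF Lm(1)] int_ind1c[OF Lm(1)] by (simp add: Sx_def W_def S_def)
    moreover have "\<epsilon>/4 * \<kappa> \<le> \<epsilon>/4 * measure G S" using kS eps by simp
    ultimately show ?thesis by linarith
  next
    assume h: "d - m \<ge> \<epsilon>/2"
    define S where "S = {d - \<epsilon>/4<..<d}"
    have t1: "a \<le> d - \<epsilon>/4" using qb mb h eps by linarith
    have t2: "d - \<epsilon>/4 + \<epsilon>/4 \<le> b" using qb by simp
    have "\<kappa> \<le> measure G {d - \<epsilon>/4<..<d - \<epsilon>/4 + \<epsilon>/4}"
      using kap t1 t2 by blast
    then have kS: "\<kappa> \<le> measure G S" unfolding S_def by simp
    have "integral\<^sup>L G (\<lambda>x. \<epsilon>/4 * indicator S x) \<le> integral\<^sup>L G (\<lambda>x. indicator R x * x - m * indicator R x)"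
    proof (rule integral_mono)
      show "integrable G (\<lambda>x. \<epsilon>/4 * indicator S x)" by (rule int_ind1c) (simp add: S_def)
      show "integrable G (\<lambda>x. indicator R x * x - m * indicator R x)"
        using int_ind[OF Lm(2)] int_ind1c[OF Lm(2)] by auto
      fix x
      show "\<epsilon>/4 * indicator S x \<le> indicator R x * x - m * indicator R x"
      proof (cases "x \<in> S")
        case True
        then have "x \<in> {c<..<d}" "m < x" "m + \<epsilon>/4 \<le> x" using h mb eps by (auto simp: S_def)
        then have "x \<in> R" using Ri by blast
        then show ?thesis using True \<open>m + \<epsilon>/4 \<le> x\<close> by (simp add: indicator_def)
      next
        case False
        then show ?thesis using Rx[of x] by (cases "x \<in> R") (simp_all add: indicator_def)
      qed
    qed
    then have "\<epsilon>/4 * measure G S \<le> Sx R - m * W R"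
      using int_ind[OF Lm(2)] int_ind1c[OF Lm(2)] by (simp add: Sx_def W_def S_def)
    moreover have "\<epsilon>/4 * \<kappa> \<le> \<epsilon>/4 * measure G S" using kS eps by simp
    ultimately show ?thesis using AR by linarith
  qed
  then show ?thesis by (simp add: L_def m_def)
qed

lemma gain_big:
  assumes eps: "\<epsilon> > 0" and kpos: "\<kappa> > 0"
    and kap: "\<forall>t. a \<le> t \<longrightarrow> t + \<epsilon>/4 \<le> b \<longrightarrow> \<kappa> \<le> measure G {t<..<t+\<epsilon>/4}"
    and big: "q n (j+1) - q n j \<ge> \<epsilon>"
  shows "(\<epsilon>/4 * \<kappa>)^2 \<le> gain n j"
proof -
  have "0 \<le> \<epsilon>/4 * \<kappa>" using eps kpos by simp
  then have "(\<epsilon>/4 * \<kappa>)^2 \<le> (mu n j * W (cellE (Suc n) (2*j+1)) - Sx (cellE (Suc n) (2*j+1)))^2"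
    using A_lower[OF eps kap big] by (intro power_mono) auto
  then show ?thesis using gain_ge by linarith
qed

end

lemma Phi_step: "n \<ge> 1 \<Longrightarrow> Phi (Suc n) = Phi n + (\<Sum>k\<in>{1..2^n}. gain n (k-1))"
proof -
  assume n1: "n \<ge> 1"
  let ?f = "\<lambda>k. (Sx (cellE (Suc n) k))^2 / W (cellE (Suc n) k)"
  have "Phi (Suc n) = (\<Sum>k\<in>{1..2*2^n}. ?f k)" by (simp add: Phi_def)
  also have "\<dots> = (\<Sum>k\<in>{1..2^n}. ?f (2*k-1) + ?f (2*k))" by (rule sum_pairs)
  also have "\<dots> = (\<Sum>k\<in>{1..2^n}. (Sx (cellE n k))^2 / W (cellE n k) + gain n (k-1))"
  proof (rule sum.cong[OF refl])
    fix k :: nat assume k: "k \<in> {1..2^n}"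
    then obtain j where kj: "k = Suc j" by (cases k) auto
    have a1: "2*k-1 = 2*j+1" "2*k = 2*j+2" "k - 1 = j" using kj by auto
    show "?f (2*k-1) + ?f (2*k) = (Sx (cellE n k))^2 / W (cellE n k) + gain n (k-1)"
      by (simp only: a1) (simp add: kj gain_def)
  qed
  also have "\<dots> = Phi n + (\<Sum>k\<in>{1..2^n}. gain n (k-1))" by (simp add: sum.distrib Phi_def)
  finally show ?thesis .
qed

lemma Wsum_step: "n \<ge> 1 \<Longrightarrow> Wsum (Suc n) = Wsum n"
proof -
  assume n1: "n \<ge> 1"
  let ?f = "\<lambda>k. W (cellE (Suc n) k)"
  have "Wsum (Suc n) = (\<Sum>k\<in>{1..2*2^n}. ?f k)" by (simp add: Wsum_def)
  also have "\<dots> = (\<Sum>k\<in>{1..2^n}. ?f (2*k-1) + ?f (2*k))" by (rule sum_pairs)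
  also have "\<dots> = (\<Sum>k\<in>{1..2^n}. W (cellE n k))"
  proof (rule sum.cong[OF refl])
    fix k :: nat assume k: "k \<in> {1..2^n}"
    then obtain j where kj: "k = Suc j" by (cases k) auto
    then have jn: "j < 2^n" using k by auto
    have a1: "2*k-1 = 2*j+1" "2*k = 2*j+2" "k = j+1" using kj by auto
    show "?f (2*k-1) + ?f (2*k) = W (cellE n k)"
      using W_split[OF n1 jn] by (simp only: a1(1) a1(2)) (simp add: a1(3))
  qed
  also have "\<dots> = Wsum n" by (simp add: Wsum_def)
  finally show ?thesis .
qed

lemma Wsum_1: "Wsum 1 \<le> 1"
proof -
  have e: "{1..2::nat} = {1,2}" by auto
  have "Wsum 1 = (\<Sum>k\<in>{1..2::nat}. W (cellE 1 k))" by (simp add: Wsum_def)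
  also have "\<dots> = W (cellE 1 1) + W (cellE 1 2)" unfolding e by simp
  also have "\<dots> = W (cellE 1 1 \<union> cellE 1 2)"
    by (rule W_union[symmetric]) (auto simp: cellE_def)
  also have "\<dots> \<le> 1" by (rule W_le1)
  finally show ?thesis .
qed

lemma Wsum_le: "n \<ge> 1 \<Longrightarrow> Wsum n \<le> 1"
proof (induction n rule: nat_induct_at_least)
  case base then show ?case by (rule Wsum_1)
next
  case (Suc n) then show ?case using Wsum_step by simp
qed

lemma Sx_abs: "S \<in> sets borel \<Longrightarrow> \<bar>Sx S\<bar> \<le> (\<bar>a\<bar>+\<bar>b\<bar>) * W S"
proof -
  assume S: "S \<in> sets borel"
  let ?M = "\<bar>a\<bar>+\<bar>b\<bar>"
  have AEM: "AE x in G. \<bar>x\<bar> \<le> ?M" using AE_ab by eventually_elim auto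
  have "Sx S \<le> integral\<^sup>L G (\<lambda>x. ?M * indicator S x)"
    unfolding Sx_def
  proof (rule integral_mono_AE[OF int_ind[OF S] int_ind1c[OF S]])
    show "AE x in G. indicator S x * x \<le> ?M * indicator S x"
      using AEM by eventually_elim (auto simp: indicator_def)
  qed
  moreover have "- Sx S \<le> integral\<^sup>L G (\<lambda>x. ?M * indicator S x)"
  proof -
    have "integral\<^sup>L G (\<lambda>x. - (?M * indicator S x)) \<le> Sx S"
      unfolding Sx_def
    proof (rule integral_mono_AE)
      show "integrable G (\<lambda>x. - (?M * indicator S x))" using int_ind1c[OF S] by simp
      show "integrable G (\<lambda>x. indicator S x * x)" by (rule int_ind[OF S])
      show "AE x in G. - (?M * indicator S x) \<le> indicator S x * x"
        using AEM by eventually_elim (auto simp: indicator_def)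
    qed
    then show ?thesis by simp
  qed
  moreover have "integral\<^sup>L G (\<lambda>x. ?M * indicator S x) = ?M * W S"
    using S by (simp add: W_def)
  ultimately show ?thesis by linarith
qed

lemma term_le: "S \<in> sets borel \<Longrightarrow> (Sx S)^2 / W S \<le> (\<bar>a\<bar>+\<bar>b\<bar>)^2 * W S"
proof -
  assume S: "S \<in> sets borel"
  show ?thesis
  proof (cases "W S = 0")
    case True then show ?thesis by simp
  next
    case False
    then have Wp: "W S > 0" using W_nonneg[of S] by linarith
    have "\<bar>Sx S\<bar>^2 \<le> ((\<bar>a\<bar>+\<bar>b\<bar>) * W S)^2"
      using Sx_abs[OF S] by (intro power_mono) auto
    then have "(Sx S)^2 \<le> (\<bar>a\<bar>+\<bar>b\<bar>)^2 * W S * W S" by (simp add: power_mult_distrib power2_eq_square mult_ac)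
    then show ?thesis using Wp by (simp add: pos_divide_le_eq)
  qed
qed

lemma Phi_bound: "n \<ge> 1 \<Longrightarrow> Phi n \<le> (\<bar>a\<bar>+\<bar>b\<bar>)^2"
proof -
  assume n1: "n \<ge> 1"
  have "Phi n \<le> (\<Sum>k\<in>{1..2^n}. (\<bar>a\<bar>+\<bar>b\<bar>)^2 * W (cellE n k))"
    unfolding Phi_def by (intro sum_mono term_le) simp
  also have "\<dots> = (\<bar>a\<bar>+\<bar>b\<bar>)^2 * Wsum n" by (simp add: Wsum_def sum_distrib_left)
  also have "\<dots> \<le> (\<bar>a\<bar>+\<bar>b\<bar>)^2 * 1" using Wsum_le[OF n1] by (intro mult_left_mono) auto
  finally show ?thesis by simp
qed

lemma Phi_nonneg: "Phi n \<ge> 0"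
  unfolding Phi_def by (intro sum_nonneg divide_nonneg_nonneg W_nonneg) auto

definition bad :: "nat \<Rightarrow> real \<Rightarrow> bool" where
  "bad n \<epsilon> \<longleftrightarrow> (\<exists>k\<in>{1..2^n}. \<epsilon> \<le> q n k - q n (k-1))"

lemma Phi_big:
  assumes n1: "n \<ge> 1" and eps: "\<epsilon> > 0" and kpos: "\<kappa> > 0"
    and kap: "\<forall>t. a \<le> t \<longrightarrow> t + \<epsilon>/4 \<le> b \<longrightarrow> \<kappa> \<le> measure G {t<..<t+\<epsilon>/4}"
    and bd: "bad n \<epsilon>"
  shows "Phi n + (\<epsilon>/4 * \<kappa>)^2 \<le> Phi (Suc n)"
proof -
  obtain k where k: "k \<in> {1..2^n}" and big: "\<epsilon> \<le> q n k - q n (k-1)" using bd unfolding bad_def by blast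
  have jn: "k - 1 < 2^n" using k by auto
  have kk: "k - 1 + 1 = k" using k by auto
  have "(\<epsilon>/4 * \<kappa>)^2 \<le> gain n (k-1)"
    using gain_big[OF n1 jn eps kpos kap] big kk by simp
  also have "\<dots> \<le> (\<Sum>k\<in>{1..2^n}. gain n (k-1))"
  proof (rule member_le_sum[OF k])
    fix x assume "x \<in> {1..2^n} - {k}"
    then have "x - 1 < 2^n" by auto
    then show "0 \<le> gain n (x-1)" by (rule gain_nonneg[OF n1])
  qed simp
  finally show ?thesis using Phi_step[OF n1] by simp
qed

lemma bad_down:
  assumes n1: "n \<ge> 1" and bd: "bad (Suc n) \<epsilon>"
  shows "bad n \<epsilon>"
proof -
  have gd: "good n" using good_all n1 by blast
  obtain k' where k': "k' \<in> {1..2^Suc n}" and big: "\<epsilon> \<le> q (Suc n) k' - q (Suc n) (k'-1)"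
    using bd unfolding bad_def by blast
  define j where "j = (k'-1) div 2"
  have cases: "k' = 2*j+1 \<or> k' = 2*j+2" using k' unfolding j_def by presburger
  have jn: "j < 2^n" using k' cases by auto
  have mb: "q n j < mu n j" "mu n j < q n (j+1)" using mu_bounds[OF n1 gd jn] by auto
  have qo: "q (Suc n) (2*j+1) = mu n j" using q_odd[OF n1 gd jn] .
  have qe0: "q (Suc n) (2*j) = q n j" using q_even[OF n1 gd, of j] jn by simp
  have qe1: "q (Suc n) (2*(j+1)) = q n (j+1)" using q_even[OF n1 gd, of "j+1"] jn by simp
  have "\<epsilon> \<le> q n (j+1) - q n j"
    using cases
  proof
    assume h: "k' = 2*j+1"
    then have "k' - 1 = 2*j" by simp
    then show ?thesis using big h qo qe0 mb by simp
  next
    assume h: "k' = 2*j+2"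
    then have "k' - 1 = 2*j+1" "k' = 2*(j+1)" by simp_all
    then show ?thesis using big qo qe1 mb by simp
  qed
  moreover have "j+1 \<in> {1..2^n}" using jn by auto
  ultimately show ?thesis unfolding bad_def by (intro bexI[of _ "j+1"]) auto
qed

lemma bad_mono: "n \<ge> 1 \<Longrightarrow> n \<le> m \<Longrightarrow> bad m \<epsilon> \<Longrightarrow> bad n \<epsilon>"
proof -
  assume n1: "n \<ge> 1" and nm: "n \<le> m"
  have "bad m \<epsilon> \<longrightarrow> bad n \<epsilon>"
    using nm
  proof (induction m rule: dec_induct)
    case base then show ?case by simp
  next
    case (step m)
    then show ?case using bad_down[of m \<epsilon>] n1 by auto
  qed
  then show "bad m \<epsilon> \<Longrightarrow> bad n \<epsilon>" by blast
qed

lemma mesh: "\<epsilon> > 0 \<Longrightarrow> \<exists>N\<ge>1. \<forall>n\<ge>N. \<not> bad n \<epsilon>"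
proof (rule ccontr)
  assume eps: "\<epsilon> > 0" and H: "\<not> (\<exists>N\<ge>1. \<forall>n\<ge>N. \<not> bad n \<epsilon>)"
  obtain \<kappa> where kpos: "\<kappa> > 0"
    and kap: "\<forall>t. a \<le> t \<longrightarrow> t + \<epsilon>/4 \<le> b \<longrightarrow> \<kappa> \<le> measure G {t<..<t+\<epsilon>/4}"
    using grid[of "\<epsilon>/4"] eps by auto
  have allbad: "bad n \<epsilon>" if "n \<ge> 1" for n
  proof -
    have "\<exists>m\<ge>n. bad m \<epsilon>" using H that by blast
    then obtain m where "m \<ge> n" "bad m \<epsilon>" by blast
    then show ?thesis using bad_mono that by blast
  qed
  define K where "K = (\<epsilon>/4 * \<kappa>)^2"
  have Kpos: "K > 0" using eps kpos by (simp add: K_def)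
  have grow: "real i * K \<le> Phi (Suc i)" for i
  proof (induction i)
    case 0 then show ?case using Phi_nonneg by simp
  next
    case (Suc i)
    have "Phi (Suc i) + K \<le> Phi (Suc (Suc i))"
      unfolding K_def using Phi_big[OF _ eps kpos kap allbad] by simp
    then show ?case using Suc by (simp add: algebra_simps)
  qed
  obtain i where "(\<bar>a\<bar>+\<bar>b\<bar>)^2 < real i * K" using reals_Archimedean3[OF Kpos] by blast
  moreover have "Phi (Suc i) \<le> (\<bar>a\<bar>+\<bar>b\<bar>)^2" by (rule Phi_bound) simp
  ultimately show False using grow[of i] by linarith
qed

lemma TB_sub:
  assumes n1: "n \<ge> 1" and k: "k \<in> {1..2^n}"
  shows "Theta_bar lo hi G n k \<subseteq> {q n (k-1)..q n k}"
proof
  fix x assume x: "x \<in> Theta_bar lo hi G n k"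
  have gd: "good n" using good_all n1 .
  have two: "(2::nat) ^ 1 \<le> 2^n" by (rule power_increasing[OF n1]) simp
  consider (one) "k = 1" | (top) "k = 2^n" "k \<noteq> 1" | (mid) "k \<noteq> 1" "k \<noteq> 2^n" by blast
  then show "x \<in> {q n (k-1)..q n k}"
  proof cases
    case one
    have s1: "sba lo hi G n 1 = ereal (q n 1)" using q_int[OF n1 gd, of 1] two by auto
    have "ereal x \<le> sba lo hi G n 1" and "x \<in> msupp G"
      using x one unfolding Theta_bar_def Theta_nl_def Let_def by (auto split: if_splits)
    then show ?thesis using one s1 supp by auto
  next
    case top
    have s1: "sba lo hi G n (2^n - 1) = ereal (q n (2^n - 1))"
      using q_int[OF n1 gd, of "2^n-1"] two by auto
    have "sba lo hi G n (2^n - 1) < ereal x" and "x \<in> msupp G"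
      using x top unfolding Theta_bar_def Theta_nl_def Let_def by (auto split: if_splits)
    then show ?thesis using top s1 supp by auto
  next
    case mid
    have k1: "0 < k - 1" "k - 1 < 2^n" "0 < k" "k < 2^n" using k mid by auto
    have s1: "sba lo hi G n (k-1) = ereal (q n (k-1))" using q_int[OF n1 gd k1(1,2)] by auto
    have s2: "sba lo hi G n k = ereal (q n k)" using q_int[OF n1 gd k1(3,4)] by auto
    have "sba lo hi G n (k-1) < ereal x" "ereal x \<le> sba lo hi G n k"
      using x mid unfolding Theta_bar_def Theta_nl_def Let_def by (auto split: if_splits)
    then show ?thesis using s1 s2 by auto
  qed
qed

lemma max_tendsto:
  "(\<lambda>n. Max ((\<lambda>k. emeasure lborel (Theta_bar lo hi G n k)) ` {1..2 ^ n})) \<longlonglongrightarrow> 0"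
proof (rule order_tendstoI)
  fix y :: ennreal assume "y < 0" then show "eventually (\<lambda>n. y < Max ((\<lambda>k. emeasure lborel (Theta_bar lo hi G n k)) ` {1..2 ^ n})) sequentially"
    by simp
next
  fix y :: ennreal assume y: "0 < y"
  obtain z where z: "0 < z" "z < y" using dense[OF y] by blast
  then have ztop: "z < top" using top.extremum_strict[of y] by (metis less_le_trans top_greatest)
  define \<epsilon> where "\<epsilon> = enn2real z"
  have ez: "ennreal \<epsilon> = z" using ztop by (simp add: \<epsilon>_def)
  have eps: "\<epsilon> > 0" using z ztop by (simp add: \<epsilon>_def enn2real_positive_iff)
  obtain N where N1: "N \<ge> 1" and NB: "\<forall>n\<ge>N. \<not> bad n \<epsilon>" using mesh[OF eps] by blast
  show "eventually (\<lambda>n. Max ((\<lambda>k. emeasure lborel (Theta_bar lo hi G n k)) ` {1..2 ^ n}) < y) sequentially"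
    unfolding eventually_sequentially
  proof (intro exI allI impI)
    fix n assume nN: "N \<le> n"
    then have n1: "n \<ge> 1" and nb: "\<not> bad n \<epsilon>" using N1 NB by auto
    have gd: "good n" using good_all n1 .
    have each: "emeasure lborel (Theta_bar lo hi G n k) \<le> ennreal \<epsilon>" if k: "k \<in> {1..2^n}" for k
    proof -
      have lt: "q n (k-1) < q n k" using cell_lt[OF n1 gd, of k] k by auto
      have "emeasure lborel (Theta_bar lo hi G n k) \<le> emeasure lborel {q n (k-1)..q n k}"
        by (rule emeasure_mono[OF TB_sub[OF n1 k]]) simp
      also have "\<dots> = ennreal (q n k - q n (k-1))" using lt by simp
      also have "\<dots> \<le> ennreal \<epsilon>"
      proof -
        have "\<not> (\<epsilon> \<le> q n k - q n (k-1))" using nb k unfolding bad_def by blast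
        then show ?thesis by (intro ennreal_leI) simp
      qed
      finally show ?thesis .
    qed
    have ne: "{1..2^n} \<noteq> ({} :: nat set)" by simp
    have "Max ((\<lambda>k. emeasure lborel (Theta_bar lo hi G n k)) ` {1..2 ^ n}) \<le> ennreal \<epsilon>"
      using each ne by (subst Max_le_iff) auto
    also have "\<dots> < y" using ez z by simp
    finally show "Max ((\<lambda>k. emeasure lborel (Theta_bar lo hi G n k)) ` {1..2 ^ n}) < y" .
  qed
qed

end

theorem lemma2:
  fixes lo hi :: ereal and G :: "real measure" and l :: "nat \<Rightarrow> nat"
  assumes "admissible_Theta lo hi"
    and "P_star lo hi G"
    and "\<And>n. n \<ge> 1 \<Longrightarrow> l n \<in> {1..2 ^ n}"
    and "\<And>n. n \<ge> 1 \<Longrightarrow> Theta_bar lo hi G (Suc n) (l (Suc n)) \<subseteq> Theta_bar lo hi G n (l n)"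
  shows "(\<lambda>n. emeasure lborel (Theta_bar lo hi G n (l n))) \<longlonglongrightarrow> 0 \<and>
     (\<lambda>n. Max ((\<lambda>k. emeasure lborel (Theta_bar lo hi G n k)) ` {1..2 ^ n})) \<longlonglongrightarrow> 0"
proof -
  from assms(2) obtain a b where ab: "a < b" "msupp G = {a..b}" and pr: "prob_space G"
    "sets G = sets borel" "emeasure G (Theta_set lo hi) = 1"
    unfolding P_star_def by blast
  interpret sba_ctx G lo hi a b
    by (intro sba_ctx.intro sba_ctx_axioms.intro pr ab) (use assms(1) in \<open>simp add: admissible_Theta_def\<close>)
  have M: "(\<lambda>n. Max ((\<lambda>k. emeasure lborel (Theta_bar lo hi G n k)) ` {1..2 ^ n})) \<longlonglongrightarrow> 0"
    by (rule max_tendsto)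
  have P1: "(\<lambda>n. emeasure lborel (Theta_bar lo hi G n (l n))) \<longlonglongrightarrow> 0"
  proof (rule tendsto_sandwich[OF _ _ tendsto_const M])
    show "eventually (\<lambda>n. 0 \<le> emeasure lborel (Theta_bar lo hi G n (l n))) sequentially" by simp
    show "eventually (\<lambda>n. emeasure lborel (Theta_bar lo hi G n (l n))
        \<le> Max ((\<lambda>k. emeasure lborel (Theta_bar lo hi G n k)) ` {1..2 ^ n})) sequentially"
      unfolding eventually_sequentially
      using assms(3) by (intro exI[of _ 1] allI impI Max_ge) auto
  qed
  show ?thesis using P1 M by simp
qed

end
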